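(* Let $H:\overline{Q_T}\times\mathbb{R}\times\mathbb{R}^d\to\mathbb{R}$ be continuous, let $u_0:\mathbb{T}^d\to\mathbb{R}$, and let $u\in\mathcal{C}^1(\overline{Q_T})$. Then $u$ is a classical solution of the initial value problem $\partial_t^\alpha u+H(t,x,u,Du)=0$ in $Q_T$, $u(0,\cdot)=u_0$ on $\mathbb{T}^d$, if and only if $u$ is a viscosity solution of this initial value problem.
   Context: Fix $d\ge1$, $T>0$, $\alpha\in(0,1)$. $\mathbb{T}^d=\mathbb{R}^d/\mathbb{Z}^d$; functions on $[0,T]\times\mathbb{T}^d$ are identified with functions on $[0,T]\times\mathbb{R}^d$ that are $\mathbb{Z}^d$-periodic in $x$. $Q_T=(0,T]\times\mathbb{T}^d$, $\overline{Q_T}=[0,T]\times\mathbb{T}^d$; $D$ is the spatial gradient; $\partial_t^\alpha$ is Caputo's derivative $(\partial_t^\alpha f)(t)=\frac{1}{\Gamma(1-\alpha)}\int_0^t f'(s)(t-s)^{-\alpha}ds$. $\mathcal{C}^1([a,b]\times O)=\{\phi\in C^1((a,b]\times O)\cap C([a,b]\times O):\partial_t\phi(\cdot,x)\in L^1(a,b)\ \forall x\in O\}$ (not required to be differentiable at $t=a$). Classical solution: $u\in\mathcal{C}^1(\overline{Q_T})$ with $u(0,\cdot)=u_0$ and $(\partial_t^\alpha u)(t,x)+H(t,x,u(t,x),Du(t,x))=0$ for all $(t,x)\in Q_T$. For measurable $f(t,x)$, $t\in(0,T]$, $r\in[0,t]$: $J_r[f](t,x)=\frac{\alpha}{\Gamma(1-\alpha)}\int_0^r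 (f(t,x)-f(t-\tau,x))\tau^{-\alpha-1}d\tau$, $K_r[f](t,x)=\frac{f(t,x)-f(0,x)}{t^\alpha\Gamma(1-\alpha)}+\frac{\alpha}{\Gamma(1-\alpha)}\int_r^t (f(t,x)-f(t-\tau,x))\tau^{-\alpha-1}d\tau$ (lower limit $0$: improper integral). Viscosity sub/supersolution: $u\in USC(\overline{Q_T})$ (resp. $LSC$) such that for all $a<b$ in $[0,T]$, every open ball $B\subset\mathbb{R}^d$, every $\phi\in\mathcal{C}^1([0,T]\times\mathbb{R}^d)$ and every $(\hat t,\hat x)\in(a,b]\times B$ where $u-\phi$ attains its maximum (resp. minimum) over $[a,b]\times\overline B$: $J_{\hat t-a}[\phi](\hat t,\hat x)+K_{\hat t-a}[u](\hat t,\hat x)+H(\hat t,\hat x,u(\hat t,\hat x),D\phi(\hat t,\hat x))\le0$ (resp. $\ge0$). A viscosity solution is $u\in C(\overline{Q_T})$ that is both; it is a viscosity solution of the initial value problem if also $u(0,\cdot)=u_0$. *)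

theory Defs
  imports "HOL-Analysis.Analysis"
begin

text \<open>Space variable x :: real^'d (d = CARD('d) \<ge> 1); functions on the torus are
  functions on real^'d that are periodic with respect to Z^d.\<close>

definition periodic_x :: "(real \<Rightarrow> real^'d \<Rightarrow> real) \<Rightarrow> bool" where
  "periodic_x u \<longleftrightarrow> (\<forall>t x i. u t (x + axis i 1) = u t x)"

definition periodic0 :: "(real^'d \<Rightarrow> real) \<Rightarrow> bool" where
  "periodic0 v \<longleftrightarrow> (\<forall>x i. v (x + axis i 1) = v x)"

definition Dx :: "(real \<Rightarrow> real^'d \<Rightarrow> real) \<Rightarrow> real \<Rightarrow> real^'d \<Rightarrow> real^'d" where
  "Dx f t x = (\<chi> i. deriv (\<lambda>h. f t (x + h *\<^sub>R axis i 1)) 0)"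

definition Dt :: "(real \<Rightarrow> real^'d \<Rightarrow> real) \<Rightarrow> real \<Rightarrow> real^'d \<Rightarrow> real" where
  "Dt f t x = deriv (\<lambda>s. f s x) t"

definition C1 :: "real \<Rightarrow> real \<Rightarrow> (real \<Rightarrow> real^'d \<Rightarrow> real) \<Rightarrow> bool" where
  "C1 a b f \<longleftrightarrow>
     continuous_on ({a..b} \<times> UNIV) (\<lambda>(t,x). f t x) \<and>
     (\<exists>ft Df. continuous_on ({a<..b} \<times> UNIV) (\<lambda>(t,x). ft t x) \<and>
              continuous_on ({a<..b} \<times> UNIV) (\<lambda>(t,x). Df t x) \<and>
              (\<forall>t x. t \<in> {a<..b} \<longrightarrow>
                 ((\<lambda>(s,y). f s y) has_derivative (\<lambda>(h,k). h * ft t x + Df t x \<bullet> k))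
                   (at (t,x) within {a<..b} \<times> UNIV))) \<and>
     (\<forall>x. (\<lambda>s. Dt f s x) absolutely_integrable_on {a..b})"

definition caputo :: "real \<Rightarrow> (real \<Rightarrow> real^'d \<Rightarrow> real) \<Rightarrow> real \<Rightarrow> real^'d \<Rightarrow> real" where
  "caputo \<alpha> f t x = 1 / Gamma (1 - \<alpha>) * integral {0..t} (\<lambda>s. Dt f s x * (t - s) powr (-\<alpha>))"

definition Jop :: "real \<Rightarrow> real \<Rightarrow> (real \<Rightarrow> real^'d \<Rightarrow> real) \<Rightarrow> real \<Rightarrow> real^'d \<Rightarrow> real" where
  "Jop \<alpha> r f t x = \<alpha> / Gamma (1 - \<alpha>) *
      integral {0..r} (\<lambda>\<tau>. (f t x - f (t - \<tau>) x) * \<tau> powr (-\<alpha> - 1))"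

definition Kop :: "real \<Rightarrow> real \<Rightarrow> (real \<Rightarrow> real^'d \<Rightarrow> real) \<Rightarrow> real \<Rightarrow> real^'d \<Rightarrow> real" where
  "Kop \<alpha> r f t x = (f t x - f 0 x) / (t powr \<alpha> * Gamma (1 - \<alpha>)) +
      \<alpha> / Gamma (1 - \<alpha>) *
      integral {r..t} (\<lambda>\<tau>. (f t x - f (t - \<tau>) x) * \<tau> powr (-\<alpha> - 1))"

definition usc_on :: "('a::topological_space) set \<Rightarrow> ('a \<Rightarrow> real) \<Rightarrow> bool" where
  "usc_on S f \<longleftrightarrow> (\<forall>p\<in>S. \<forall>e>0. \<forall>\<^sub>F q in at p within S. f q < f p + e)"

definition lsc_on :: "('a::topological_space) set \<Rightarrow> ('a \<Rightarrow> real) \<Rightarrow> bool" where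
  "lsc_on S f \<longleftrightarrow> (\<forall>p\<in>S. \<forall>e>0. \<forall>\<^sub>F q in at p within S. f p - e < f q)"

definition classical_solution ::
  "real \<Rightarrow> real \<Rightarrow> (real \<Rightarrow> real^'d \<Rightarrow> real \<Rightarrow> real^'d \<Rightarrow> real) \<Rightarrow> (real^'d \<Rightarrow> real)
   \<Rightarrow> (real \<Rightarrow> real^'d \<Rightarrow> real) \<Rightarrow> bool" where
  "classical_solution \<alpha> T H u0 u \<longleftrightarrow>
     periodic_x u \<and> C1 0 T u \<and> (\<forall>x. u 0 x = u0 x) \<and>
     (\<forall>t x. t \<in> {0<..T} \<longrightarrow> caputo \<alpha> u t x + H t x (u t x) (Dx u t x) = 0)"

definition viscosity_subsolution ::
  "real \<Rightarrow> real \<Rightarrow> (real \<Rightarrow> real^'d \<Rightarrow> real \<Rightarrow> real^'d \<Rightarrow> real)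
   \<Rightarrow> (real \<Rightarrow> real^'d \<Rightarrow> real) \<Rightarrow> bool" where
  "viscosity_subsolution \<alpha> T H u \<longleftrightarrow>
     periodic_x u \<and> usc_on ({0..T} \<times> UNIV) (\<lambda>(t,x). u t x) \<and>
     (\<forall>a b c \<rho> \<phi> th xh. 0 \<le> a \<and> a < b \<and> b \<le> T \<and> 0 < \<rho> \<and> C1 0 T \<phi> \<and>
        th \<in> {a<..b} \<and> xh \<in> ball c \<rho> \<and>
        (\<forall>s y. s \<in> {a..b} \<and> y \<in> cball c \<rho> \<longrightarrow> u s y - \<phi> s y \<le> u th xh - \<phi> th xh)
        \<longrightarrow> Jop \<alpha> (th - a) \<phi> th xh + Kop \<alpha> (th - a) u th xh + H th xh (u th xh) (Dx \<phi> th xh) \<le> 0)"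

definition viscosity_supersolution ::
  "real \<Rightarrow> real \<Rightarrow> (real \<Rightarrow> real^'d \<Rightarrow> real \<Rightarrow> real^'d \<Rightarrow> real)
   \<Rightarrow> (real \<Rightarrow> real^'d \<Rightarrow> real) \<Rightarrow> bool" where
  "viscosity_supersolution \<alpha> T H u \<longleftrightarrow>
     periodic_x u \<and> lsc_on ({0..T} \<times> UNIV) (\<lambda>(t,x). u t x) \<and>
     (\<forall>a b c \<rho> \<phi> th xh. 0 \<le> a \<and> a < b \<and> b \<le> T \<and> 0 < \<rho> \<and> C1 0 T \<phi> \<and>
        th \<in> {a<..b} \<and> xh \<in> ball c \<rho> \<and>
        (\<forall>s y. s \<in> {a..b} \<and> y \<in> cball c \<rho> \<longrightarrow> u th xh - \<phi> th xh \<le> u s y - \<phi> s y)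
        \<longrightarrow> Jop \<alpha> (th - a) \<phi> th xh + Kop \<alpha> (th - a) u th xh + H th xh (u th xh) (Dx \<phi> th xh) \<ge> 0)"

definition viscosity_solution_ivp ::
  "real \<Rightarrow> real \<Rightarrow> (real \<Rightarrow> real^'d \<Rightarrow> real \<Rightarrow> real^'d \<Rightarrow> real) \<Rightarrow> (real^'d \<Rightarrow> real)
   \<Rightarrow> (real \<Rightarrow> real^'d \<Rightarrow> real) \<Rightarrow> bool" where
  "viscosity_solution_ivp \<alpha> T H u0 u \<longleftrightarrow>
     continuous_on ({0..T} \<times> UNIV) (\<lambda>(t,x). u t x) \<and>
     viscosity_subsolution \<alpha> T H u \<and> viscosity_supersolution \<alpha> T H u \<and>
     (\<forall>x. u 0 x = u0 x)"

end

theory Submission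
  imports Defs
begin


lemma lip_bound:
  fixes v v' :: "real \<Rightarrow> real"
  assumes t: "0 < t" and cv: "continuous_on {0..t} v"
    and dv: "\<And>s. s \<in> {0<..<t} \<Longrightarrow> (v has_real_derivative v' s) (at s)"
    and cv': "continuous_on {0<..t} v'"
  shows "\<exists>M\<ge>0. \<forall>\<tau>\<in>{0..t/2}. \<bar>v t - v (t-\<tau>)\<bar> \<le> M * \<tau>"
proof -
  have "compact (v' ` {t/2..t})"
    by (rule compact_continuous_image) (use cv' t in \<open>auto intro: continuous_on_subset\<close>)
  then obtain B where B: "\<And>s. s \<in> {t/2..t} \<Longrightarrow> \<bar>v' s\<bar> \<le> B"
    using compact_imp_bounded bounded_real by (metis image_eqI)
  have "\<bar>v t - v (t-\<tau>)\<bar> \<le> \<bar>B\<bar> * \<tau>" if \<tau>: "\<tau> \<in> {0..t/2}" for \<tau>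
  proof (cases "\<tau> = 0")
    case True then show ?thesis by simp
  next
    case False
    then have "t - \<tau> < t" using \<tau> by auto
    from MVT[OF this, of v] obtain l z where z: "t - \<tau> < z" "z < t" "DERIV v z :> l"
      "v t - v (t - \<tau>) = (t - (t - \<tau>)) * l"
    proof -
      have "continuous_on {t-\<tau>..t} v" using cv \<tau> by (auto intro: continuous_on_subset)
      moreover have "v differentiable (at x)" if "t-\<tau> < x" "x < t" for x
        using dv[of x] that \<tau> real_differentiable_def by auto
      ultimately show ?thesis using MVT[of "t-\<tau>" t v] \<open>t - \<tau> < t\<close> that by blast
    qed
    have "l = v' z" using DERIV_unique z(3) dv[of z] z \<tau> by auto
    moreover have "\<bar>v' z\<bar> \<le> \<bar>B\<bar>" using B[of z] z \<tau> by auto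
    ultimately show ?thesis using z(4) \<tau>
      by (simp add: abs_mult mult.commute mult_left_mono)
  qed
  then show ?thesis by (intro exI[of _ "\<bar>B\<bar>"]) auto
qed



lemma G_integrable_1d:
  fixes v v' :: "real \<Rightarrow> real"
  assumes t: "0 < t" and a: "0 < \<alpha>" "\<alpha> < 1" and cv: "continuous_on {0..t} v"
    and dv: "\<And>s. s \<in> {0<..<t} \<Longrightarrow> (v has_real_derivative v' s) (at s)"
    and cv': "continuous_on {0<..t} v'"
  shows "(\<lambda>\<tau>. (v t - v (t-\<tau>)) * \<tau> powr (-\<alpha>-1)) integrable_on {0..t}"
proof -
  obtain M where M: "M \<ge> 0" "\<And>\<tau>. \<tau>\<in>{0..t/2} \<Longrightarrow> \<bar>v t - v (t-\<tau>)\<bar> \<le> M * \<tau>"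
    using lip_bound[OF t cv dv cv'] by blast
  let ?G = "\<lambda>\<tau>. (v t - v (t-\<tau>)) * \<tau> powr (-\<alpha>-1)"
  have cG: "continuous_on {0<..t} ?G"
  proof -
    have "continuous_on {0<..t} (\<lambda>\<tau>. v (t - \<tau>))"
      by (rule continuous_on_compose2[OF cv]) (auto intro!: continuous_intros)
    then show ?thesis by (auto intro!: continuous_intros)
  qed
  have i1: "?G absolutely_integrable_on {0<..t/2}"
  proof (rule measurable_bounded_by_integrable_imp_absolutely_integrable)
    show "?G \<in> borel_measurable (lebesgue_on {0<..t/2})"
      by (rule continuous_imp_measurable_on_sets_lebesgue) (use cG in \<open>auto intro: continuous_on_subset\<close>)
    show "{0<..t/2} \<in> sets lebesgue" by simp
    show "(\<lambda>\<tau>. M * \<tau> powr (-\<alpha>)) integrable_on {0<..t/2}"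
    proof -
      have "(\<lambda>x. x powr (-\<alpha>)) integrable_on {0<..t/2}"
        by (rule integrable_on_powr_from_0') (use a t in auto)
      from integrable_on_cmult_left[OF this, of M] show ?thesis by simp
    qed
    show "norm (?G \<tau>) \<le> M * \<tau> powr (-\<alpha>)" if "\<tau> \<in> {0<..t/2}" for \<tau>
    proof -
      have "norm (?G \<tau>) = \<bar>v t - v (t-\<tau>)\<bar> * \<tau> powr (-\<alpha>-1)" by (simp add: abs_mult)
      also have "\<dots> \<le> M * \<tau> * \<tau> powr (-\<alpha>-1)" using M(2)[of \<tau>] that by (auto intro: mult_right_mono)
      also have "\<dots> = M * \<tau> powr (-\<alpha>)" using that
        by (simp add: powr_diff powr_minus field_simps)
      finally show ?thesis .
    qed
  qed
  have i1': "?G integrable_on {0..t/2}"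
  proof (rule integrable_spike_set[OF absolutely_integrable_on_def[THEN iffD1, OF i1, THEN conjunct1]])
    show "negligible {x \<in> {0<..t/2} - {0..t/2}. ?G x \<noteq> 0}" by (rule negligible_subset[of "{}"]) auto
    show "negligible {x \<in> {0..t/2} - {0<..t/2}. ?G x \<noteq> 0}" by (rule negligible_subset[of "{0}"]) auto
  qed
  have i2: "?G integrable_on {t/2..t}"
    by (rule integrable_continuous_interval) (use cG t in \<open>auto intro: continuous_on_subset\<close>)
  show ?thesis
    using Henstock_Kurzweil_Integration.integrable_combine[OF _ _ i1' i2] t by simp
qed



lemma identity_1d:
  fixes v v' :: "real \<Rightarrow> real"
  assumes t: "0 < t" and a: "0 < \<alpha>" "\<alpha> < 1" and cv: "continuous_on {0..t} v"
    and dv: "\<And>s. s \<in> {0<..<t} \<Longrightarrow> (v has_real_derivative v' s) (at s)"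
    and cv': "continuous_on {0<..t} v'"
  shows "((\<lambda>\<tau>. v' (t-\<tau>) * \<tau> powr (-\<alpha>)) has_integral
           ((v t - v 0) * t powr (-\<alpha>) + \<alpha> * integral {0..t} (\<lambda>\<tau>. (v t - v (t-\<tau>)) * \<tau> powr (-\<alpha>-1)))) {0..t}"
proof -
  obtain M where M: "M \<ge> 0" "\<And>\<tau>. \<tau>\<in>{0..t/2} \<Longrightarrow> \<bar>v t - v (t-\<tau>)\<bar> \<le> M * \<tau>"
    using lip_bound[OF t cv dv cv'] by blast
  define G where "G = (\<lambda>\<tau>. (v t - v (t-\<tau>)) * \<tau> powr (-\<alpha>-1))"
  define F where "F = (\<lambda>\<tau>. (v t - v (t-\<tau>)) * \<tau> powr (-\<alpha>))"
  have iG: "G integrable_on {0..t}" unfolding G_def by (rule G_integrable_1d[OF t a cv dv cv'])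
  have cvr: "continuous_on {0<..t} (\<lambda>\<tau>. v (t - \<tau>))"
    by (rule continuous_on_compose2[OF cv]) (auto intro!: continuous_intros)
  have cF: "continuous_on {0..t} F"
  proof (clarsimp simp: continuous_on_eq_continuous_within)
    fix \<tau> assume \<tau>: "0 \<le> \<tau>" "\<tau> \<le> t"
    show "continuous (at \<tau> within {0..t}) F"
    proof (cases "\<tau> = 0")
      case True
      have "(F \<longlongrightarrow> 0) (at 0 within {0..t})"
      proof (rule Lim_null_comparison)
        show "\<forall>\<^sub>F x in at 0 within {0..t}. norm (F x) \<le> M * x powr (1 - \<alpha>)"
        proof -
          have "\<forall>\<^sub>F x in at 0 within {0..t}. x \<in> {0..t} \<and> x \<noteq> 0 \<and> dist x 0 < t/2"
            using t by (auto simp: eventually_at intro!: exI[of _ "t/2"])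
          then show ?thesis
          proof (rule eventually_mono)
            fix x assume x: "x \<in> {0..t} \<and> x \<noteq> 0 \<and> dist x 0 < t / 2"
            then have xx: "0 < x" "x \<le> t/2" by auto
            have "norm (F x) = \<bar>v t - v (t-x)\<bar> * x powr (-\<alpha>)" by (simp add: F_def abs_mult)
            also have "\<dots> \<le> M * x * x powr (-\<alpha>)" using M(2)[of x] xx by (auto intro: mult_right_mono)
            also have "\<dots> = M * x powr (1 - \<alpha>)" using xx by (simp add: powr_diff powr_minus field_simps)
            finally show "norm (F x) \<le> M * x powr (1 - \<alpha>)" .
          qed
        qed
        have ev0: "\<forall>\<^sub>F x in at 0 within {0..t}. 0 \<le> x" by (auto simp: eventually_at_filter)
        have "((\<lambda>x. x powr (1 - \<alpha>)) \<longlongrightarrow> 0) (at 0 within {0..t})"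
          by (rule tendsto_zero_powrI[where b="1-\<alpha>"]) (use a ev0 in \<open>auto intro!: tendsto_ident_at tendsto_const\<close>)
        then show "((\<lambda>x. M * x powr (1 - \<alpha>)) \<longlongrightarrow> 0) (at 0 within {0..t})"
          using tendsto_mult_right_zero by blast
      qed
      moreover have "F 0 = 0" by (simp add: F_def)
      ultimately show ?thesis using True by (simp add: continuous_within)
    next
      case False
      have "continuous_on {0<..t} F" unfolding F_def using cvr by (auto intro!: continuous_intros)
      then have "continuous (at \<tau> within {0<..t}) F" using \<tau> False by (simp add: continuous_on_eq_continuous_within)
      moreover have "at \<tau> within {0..t} = at \<tau> within {0<..t}"
        by (rule at_within_nhd[of _ "{0<..}"]) (use \<tau> False in auto)
      ultimately show ?thesis by simp
    qed
  qed
  have dF: "(F has_vector_derivative (v' (t-\<tau>) * \<tau> powr (-\<alpha>) - \<alpha> * G \<tau>)) (at \<tau>)"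
    if \<tau>: "\<tau> \<in> {0<..<t}" for \<tau>
  proof -
    have d1: "((\<lambda>\<tau>. v (t - \<tau>)) has_real_derivative v' (t-\<tau>) * (-1)) (at \<tau>)"
    proof -
      have "(v has_real_derivative v' (t-\<tau>)) (at (t-\<tau>))" using dv[of "t-\<tau>"] \<tau> by auto
      moreover have "((\<lambda>\<tau>. t - \<tau>) has_real_derivative -1) (at \<tau>)" by (auto intro!: derivative_eq_intros)
      ultimately show ?thesis using DERIV_chain2[where f=v and g="\<lambda>\<tau>. t - \<tau>"] by blast
    qed
    have d2: "((\<lambda>\<tau>. \<tau> powr (-\<alpha>)) has_real_derivative (-\<alpha>) * \<tau> powr (-\<alpha> - 1)) (at \<tau>)"
      using has_real_derivative_powr[of \<tau> "-\<alpha>"] \<tau> by simp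
    have "(F has_real_derivative ((v t - v (t-\<tau>)) * ((-\<alpha>) * \<tau> powr (-\<alpha> - 1)) + (0 - v' (t-\<tau>) * (-1)) * \<tau> powr (-\<alpha>))) (at \<tau>)"
    proof -
      have d3: "((\<lambda>\<tau>. v t - v (t-\<tau>)) has_real_derivative 0 - v'(t-\<tau>)*(-1)) (at \<tau>)"
        by (rule DERIV_diff[OF DERIV_const d1])
      have e: "(0 - v'(t-\<tau>)*(-1)) * \<tau> powr (-\<alpha>) + (v t - v (t-\<tau>)) * ((-\<alpha>) * \<tau> powr (-\<alpha> - 1))
          = (0 - v' (t-\<tau>) * (-1)) * \<tau> powr (-\<alpha>) + (v t - v (t-\<tau>)) * ((-\<alpha>) * \<tau> powr (-\<alpha> - 1))" ..
      show ?thesis unfolding F_def by (rule DERIV_mult'[OF d3 d2])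
    qed
    moreover have "(v t - v (t-\<tau>)) * ((-\<alpha>) * \<tau> powr (-\<alpha> - 1)) + (0 - v' (t-\<tau>) * (-1)) * \<tau> powr (-\<alpha>)
       = v' (t-\<tau>) * \<tau> powr (-\<alpha>) - \<alpha> * G \<tau>" by (simp add: G_def algebra_simps)
    ultimately show ?thesis unfolding has_real_derivative_iff_has_vector_derivative[symmetric] by metis
  qed
  have FTC: "((\<lambda>\<tau>. v' (t-\<tau>) * \<tau> powr (-\<alpha>) - \<alpha> * G \<tau>) has_integral (F t - F 0)) {0..t}"
    by (rule fundamental_theorem_of_calculus_interior) (use t cF dF in auto)
  have "((\<lambda>\<tau>. (v' (t-\<tau>) * \<tau> powr (-\<alpha>) - \<alpha> * G \<tau>) + \<alpha> * G \<tau>) has_integral (F t - F 0) + \<alpha> * integral {0..t} G) {0..t}"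
    by (intro has_integral_add FTC has_integral_mult_right integrable_integral iG)
  moreover have "F t - F 0 = (v t - v 0) * t powr (-\<alpha>)" by (simp add: F_def)
  ultimately show ?thesis by (simp add: G_def)
qed



lemma C1_time:
  assumes "C1 0 T f"
  obtains ft where "continuous_on {0..T} (\<lambda>s. f s x)" "continuous_on {0<..T} ft"
    "\<And>s. s \<in> {0<..<T} \<Longrightarrow> ((\<lambda>s. f s x) has_real_derivative ft s) (at s)"
proof -
  from assms obtain ft Df where c: "continuous_on ({0..T} \<times> UNIV) (\<lambda>(t,x). f t x)"
    and cft: "continuous_on ({0<..T} \<times> UNIV) (\<lambda>(t,x). ft t x)"
    and d: "\<And>t x. t \<in> {0<..T} \<Longrightarrow>
                 ((\<lambda>(s,y). f s y) has_derivative (\<lambda>(h,k). h * ft t x + Df t x \<bullet> k))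
                   (at (t,x) within {0<..T} \<times> UNIV)"
    unfolding C1_def by blast
  have c1: "continuous_on {0..T} (\<lambda>s. f s x)"
    by (rule continuous_on_compose2[OF c, of "{0..T}" "\<lambda>s. (s,x)", simplified]) (auto intro!: continuous_intros)
  have c2: "continuous_on {0<..T} (\<lambda>s. ft s x)"
    by (rule continuous_on_compose2[OF cft, of "{0<..T}" "\<lambda>s. (s,x)", simplified]) (auto intro!: continuous_intros)
  have d2: "((\<lambda>s. f s x) has_real_derivative ft s x) (at s)" if s: "s \<in> {0<..<T}" for s
  proof -
    have "((\<lambda>s. (\<lambda>(s,y). f s y) (s,x)) has_derivative
          (\<lambda>h. (\<lambda>p (h,k). h * ft (fst p) (snd p) + Df (fst p) (snd p) \<bullet> k) (s,x) (h,0))) (at s within {0<..T})"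
    proof (rule has_derivative_in_compose2[where t="{0<..T} \<times> UNIV"])
      show "((\<lambda>(s,y). f s y) has_derivative (\<lambda>p (h,k). h * ft (fst p) (snd p) + Df (fst p) (snd p) \<bullet> k) p)
              (at p within {0<..T} \<times> UNIV)" if "p \<in> {0<..T} \<times> UNIV" for p
        using d[of "fst p" "snd p"] that by (cases p) auto
      show "(\<lambda>s. (s,x)) ` {0<..T} \<subseteq> {0<..T} \<times> UNIV" by auto
      show "s \<in> {0<..T}" using s by auto
      show "((\<lambda>s. (s,x)) has_derivative (\<lambda>h. (h,0))) (at s within {0<..T})"
        by (auto intro!: derivative_eq_intros)
    qed
    then have "((\<lambda>s. f s x) has_derivative (\<lambda>h. ft s x * h)) (at s within {0<..T})"
      by (simp add: mult.commute)
    moreover have "at s within {0<..T} = at s"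
      by (rule at_within_interior) (use s interior_mono[of "{0<..<T}" "{0<..T}"] in auto)
    ultimately show ?thesis by (simp add: has_field_derivative_def)
  qed
  show ?thesis using that[OF c1 c2 d2] by blast
qed

lemma C1_space:
  assumes "C1 0 T f" "t \<in> {0<..T}"
  shows "((\<lambda>h. f t (x + h *\<^sub>R axis i 1)) has_real_derivative (Dx f t x $ i)) (at 0)"
proof -
  from assms obtain ft Df where
    d: "\<And>t x. t \<in> {0<..T} \<Longrightarrow>
                 ((\<lambda>(s,y). f s y) has_derivative (\<lambda>(h,k). h * ft t x + Df t x \<bullet> k))
                   (at (t,x) within {0<..T} \<times> UNIV)"
    unfolding C1_def by blast
  have "((\<lambda>h. (\<lambda>(s,y). f s y) (t, x + h *\<^sub>R axis i 1)) has_derivative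
          (\<lambda>h. (\<lambda>p (h,k). h * ft (fst p) (snd p) + Df (fst p) (snd p) \<bullet> k) (t, x + 0 *\<^sub>R axis i 1) (0, h *\<^sub>R axis i 1))) (at 0 within UNIV)"
  proof (rule has_derivative_in_compose2[where t="{0<..T} \<times> UNIV"])
    show "((\<lambda>(s,y). f s y) has_derivative (\<lambda>p (h,k). h * ft (fst p) (snd p) + Df (fst p) (snd p) \<bullet> k) p)
            (at p within {0<..T} \<times> UNIV)" if "p \<in> {0<..T} \<times> UNIV" for p
      using d[of "fst p" "snd p"] that by (cases p) auto
    show "(\<lambda>h. (t, x + h *\<^sub>R axis i 1)) ` UNIV \<subseteq> {0<..T} \<times> UNIV" using assms by auto
    show "((\<lambda>h. (t, x + h *\<^sub>R axis i 1)) has_derivative (\<lambda>h. (0, h *\<^sub>R axis i 1))) (at 0 within UNIV)"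
      by (auto intro!: derivative_eq_intros)
  qed simp
  then have D: "((\<lambda>h. f t (x + h *\<^sub>R axis i 1)) has_derivative (\<lambda>h. (Df t x $ i) * h)) (at 0)"
    by (simp add: inner_axis mult.commute)
  then have "deriv (\<lambda>h. f t (x + h *\<^sub>R axis i 1)) 0 = Df t x $ i"
    by (intro DERIV_imp_deriv) (simp add: has_field_derivative_def)
  then have "Dx f t x $ i = Df t x $ i" by (simp add: Dx_def)
  with D show ?thesis by (simp add: has_field_derivative_def)
qed



lemma reflect_integral:
  fixes g :: "real \<Rightarrow> real"
  assumes "(g has_integral I) {0..t}" "0 \<le> t"
  shows "((\<lambda>s. g (t - s)) has_integral I) {0..t}"
proof -
  have "((\<lambda>x. g ((-1) *\<^sub>R x + t)) has_integral (1 / (\<bar>-1\<bar> ^ DIM(real))) *\<^sub>R I)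
          ((\<lambda>x. (1 / (-1)) *\<^sub>R x + -((1 / (-1)) *\<^sub>R t)) ` cbox 0 t)"
    by (rule has_integral_affinity) (use assms in auto)
  moreover have "(\<lambda>x. (1 / (-1)) *\<^sub>R x + -((1 / (-1)) *\<^sub>R t)) ` cbox 0 t = {0..t::real}"
  proof -
    have "(\<lambda>x. (1 / (-1)) *\<^sub>R x + -((1 / (-1)) *\<^sub>R t)) = (\<lambda>x::real. t - x)" by auto
    moreover have "(\<lambda>x::real. t - x) ` {0..t} = {0..t}"
      by (auto simp: image_iff intro!: bexI[where x="t - _"])
    ultimately show ?thesis by simp
  qed
  ultimately show ?thesis by simp
qed

lemma G_integrable:
  assumes "C1 0 T f" "0 < t" "t \<le> T" "0 < \<alpha>" "\<alpha> < 1"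
  shows "(\<lambda>\<tau>. (f t x - f (t-\<tau>) x) * \<tau> powr (-\<alpha>-1)) integrable_on {0..t}"
proof -
  obtain ft where c: "continuous_on {0..T} (\<lambda>s. f s x)" "continuous_on {0<..T} ft"
    "\<And>s. s \<in> {0<..<T} \<Longrightarrow> ((\<lambda>s. f s x) has_real_derivative ft s) (at s)"
    using C1_time[OF assms(1)] by blast
  show ?thesis
    by (rule G_integrable_1d[where v="\<lambda>s. f s x" and v'=ft])
       (use assms c in \<open>auto intro: continuous_on_subset\<close>)
qed

lemma caputo_JK:
  assumes "C1 0 T f" "0 < t" "t \<le> T" "0 < \<alpha>" "\<alpha> < 1" "0 \<le> r" "r \<le> t"
  shows "caputo \<alpha> f t x = Jop \<alpha> r f t x + Kop \<alpha> r f t x"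
proof -
  obtain ft where c: "continuous_on {0..T} (\<lambda>s. f s x)" "continuous_on {0<..T} ft"
    "\<And>s. s \<in> {0<..<T} \<Longrightarrow> ((\<lambda>s. f s x) has_real_derivative ft s) (at s)"
    using C1_time[OF assms(1)] by blast
  define G where "G = (\<lambda>\<tau>. (f t x - f (t-\<tau>) x) * \<tau> powr (-\<alpha>-1))"
  have iG: "G integrable_on {0..t}" unfolding G_def by (rule G_integrable[OF assms(1-5)])
  have "((\<lambda>\<tau>. ft (t-\<tau>) * \<tau> powr (-\<alpha>)) has_integral
           ((f t x - f 0 x) * t powr (-\<alpha>) + \<alpha> * integral {0..t} G)) {0..t}"
    unfolding G_def
    by (rule identity_1d[where v="\<lambda>s. f s x" and v'=ft])
       (use assms c in \<open>auto intro: continuous_on_subset\<close>)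
  from reflect_integral[OF this] assms
  have "((\<lambda>s. ft s * (t - s) powr (-\<alpha>)) has_integral
           ((f t x - f 0 x) * t powr (-\<alpha>) + \<alpha> * integral {0..t} G)) {0..t}" (is "(_ has_integral ?I) _") by simp
  then have "((\<lambda>s. Dt f s x * (t - s) powr (-\<alpha>)) has_integral
           ((f t x - f 0 x) * t powr (-\<alpha>) + \<alpha> * integral {0..t} G)) {0..t}"
  proof (rule has_integral_spike_finite[where S="{0,t}", rotated 2])
    fix s assume s: "s \<in> {0..t} - {0,t}"
    then have "Dt f s x = ft s" unfolding Dt_def
      by (intro DERIV_imp_deriv c(3)) (use assms in auto)
    then show "Dt f s x * (t - s) powr (-\<alpha>) = ft s * (t - s) powr (-\<alpha>)" by simp
  qed simp
  then have cap: "caputo \<alpha> f t x = 1 / Gamma (1 - \<alpha>) * ((f t x - f 0 x) * t powr (-\<alpha>) + \<alpha> * integral {0..t} G)"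
    unfolding caputo_def by (simp add: integral_unique)
  have comb: "integral {0..r} G + integral {r..t} G = integral {0..t} G"
    by (rule Henstock_Kurzweil_Integration.integral_combine) (use assms iG in auto)
  have "Jop \<alpha> r f t x + Kop \<alpha> r f t x =
        \<alpha> / Gamma (1 - \<alpha>) * integral {0..r} G + ((f t x - f 0 x) / (t powr \<alpha> * Gamma (1 - \<alpha>)) +
        \<alpha> / Gamma (1 - \<alpha>) * integral {r..t} G)"
    unfolding Jop_def Kop_def G_def by simp
  also have "\<dots> = 1 / Gamma (1 - \<alpha>) * ((f t x - f 0 x) * t powr (-\<alpha>) + \<alpha> * integral {0..t} G)"
  proof -
    have "t powr \<alpha> > 0" using assms by simp
    moreover have "Gamma (1 - \<alpha>) > 0" using assms by (intro Gamma_real_pos) simp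
    ultimately show ?thesis using comb[symmetric] by (simp add: powr_minus field_simps)
  qed
  finally show ?thesis using cap by simp
qed



lemma Dx_eq_max:
  assumes "C1 0 T f" "C1 0 T g" "th \<in> {0<..T}" "xh \<in> ball c \<rho>"
    and mx: "\<And>y. y \<in> cball c \<rho> \<Longrightarrow> f th y - g th y \<le> f th xh - g th xh"
  shows "Dx f th xh = Dx g th xh"
proof (subst vec_eq_iff, rule allI)
  fix i
  have d: "((\<lambda>h. f th (xh + h *\<^sub>R axis i 1) - g th (xh + h *\<^sub>R axis i 1)) has_real_derivative
           (Dx f th xh $ i - Dx g th xh $ i)) (at 0)"
    by (intro DERIV_diff C1_space[OF assms(1,3)] C1_space[OF assms(2,3)])
  have "Dx f th xh $ i - Dx g th xh $ i = 0"
  proof (rule DERIV_local_max[OF d])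
    show "0 < \<rho> - dist c xh" using assms(4) by simp
    show "\<forall>y. \<bar>0 - y\<bar> < \<rho> - dist c xh \<longrightarrow>
      f th (xh + y *\<^sub>R axis i 1) - g th (xh + y *\<^sub>R axis i 1) \<le> f th (xh + 0 *\<^sub>R axis i 1) - g th (xh + 0 *\<^sub>R axis i 1)"
    proof (intro allI impI)
      fix y :: real assume y: "\<bar>0 - y\<bar> < \<rho> - dist c xh"
      have "dist c (xh + y *\<^sub>R axis i 1) \<le> dist c xh + dist xh (xh + y *\<^sub>R axis i 1)"
        by (rule dist_triangle)
      also have "dist xh (xh + y *\<^sub>R axis i 1) = \<bar>y\<bar>" by (simp add: dist_norm)
      finally have "xh + y *\<^sub>R axis i 1 \<in> cball c \<rho>" using y by simp
      from mx[OF this] show "f th (xh + y *\<^sub>R axis i 1) - g th (xh + y *\<^sub>R axis i 1) \<le> f th (xh + 0 *\<^sub>R axis i 1) - g th (xh + 0 *\<^sub>R axis i 1)"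
        by simp
    qed
  qed
  then show "Dx f th xh $ i = Dx g th xh $ i" by simp
qed

lemma cont_usc_lsc:
  assumes "continuous_on S f"
  shows "usc_on S f" "lsc_on S f"
proof -
  have t: "(f \<longlongrightarrow> f p) (at p within S)" if "p \<in> S" for p
    using assms that by (simp add: continuous_on_def)
  show "usc_on S f" unfolding usc_on_def
    by (auto intro: order_tendstoD(2)[OF t])
  show "lsc_on S f" unfolding lsc_on_def
    by (auto intro: order_tendstoD(1)[OF t])
qed

lemma J_mono:
  assumes "C1 0 T f" "C1 0 T g" "0 < th" "th \<le> T" "0 < \<alpha>" "\<alpha> < 1" "0 \<le> r" "r \<le> th"
    and le: "\<And>\<tau>. \<tau> \<in> {0<..r} \<Longrightarrow> f th xh - f (th - \<tau>) xh \<le> g th xh - g (th - \<tau>) xh"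
  shows "Jop \<alpha> r f th xh \<le> Jop \<alpha> r g th xh"
proof -
  have i: "(\<lambda>\<tau>. (h th xh - h (th-\<tau>) xh) * \<tau> powr (-\<alpha>-1)) integrable_on {0..r}" if "C1 0 T h" for h
    by (rule integrable_on_subinterval[OF G_integrable[OF that assms(3-6)]]) (use assms in auto)
  have "integral {0..r} (\<lambda>\<tau>. (f th xh - f (th-\<tau>) xh) * \<tau> powr (-\<alpha>-1))
        \<le> integral {0..r} (\<lambda>\<tau>. (g th xh - g (th-\<tau>) xh) * \<tau> powr (-\<alpha>-1))"
  proof (rule integral_le[OF i[OF assms(1)] i[OF assms(2)]])
    fix \<tau> assume \<tau>: "\<tau> \<in> {0..r}"
    show "(f th xh - f (th-\<tau>) xh) * \<tau> powr (-\<alpha>-1) \<le> (g th xh - g (th-\<tau>) xh) * \<tau> powr (-\<alpha>-1)"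
    proof (cases "\<tau> = 0")
      case False then show ?thesis using le[of \<tau>] \<tau> by (auto intro: mult_right_mono)
    qed simp
  qed
  moreover have "\<alpha> / Gamma (1 - \<alpha>) \<ge> 0"
    using assms Gamma_real_pos[of "1-\<alpha>"] by simp
  ultimately show ?thesis unfolding Jop_def by (rule mult_left_mono)
qed

theorem proposition2p10:
  fixes \<alpha> T :: real
    and H :: "real \<Rightarrow> real^'d \<Rightarrow> real \<Rightarrow> real^'d \<Rightarrow> real"
    and u0 :: "real^'d \<Rightarrow> real"
    and u :: "real \<Rightarrow> real^'d \<Rightarrow> real"
  assumes "0 < T" and "0 < \<alpha>" and "\<alpha> < 1"
    and "continuous_on ({0..T} \<times> UNIV \<times> UNIV \<times> UNIV) (\<lambda>(t,x,r,p). H t x r p)"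
    and "\<forall>t x r p i. H t (x + axis i 1) r p = H t x r p"
    and "periodic0 u0"
    and "periodic_x u" and "C1 0 T u"
  shows "classical_solution \<alpha> T H u0 u \<longleftrightarrow> viscosity_solution_ivp \<alpha> T H u0 u"
proof
  have cu: "continuous_on ({0..T} \<times> UNIV) (\<lambda>(t,x). u t x)" using assms(8) by (simp add: C1_def)
  assume cl: "classical_solution \<alpha> T H u0 u"
  then have eq: "\<And>t x. t \<in> {0<..T} \<Longrightarrow> caputo \<alpha> u t x + H t x (u t x) (Dx u t x) = 0"
    and ini: "\<forall>x. u 0 x = u0 x" by (auto simp: classical_solution_def)
  have sub: "viscosity_subsolution \<alpha> T H u"
    unfolding viscosity_subsolution_def
  proof (intro conjI allI impI)
    show "periodic_x u" by fact
    show "usc_on ({0..T} \<times> UNIV) (\<lambda>(t,x). u t x)" by (rule cont_usc_lsc(1)[OF cu])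
    fix a b c \<rho> \<phi> th xh
    assume h: "0 \<le> a \<and> a < b \<and> b \<le> T \<and> 0 < \<rho> \<and> C1 0 T \<phi> \<and> th \<in> {a<..b} \<and> xh \<in> ball c \<rho> \<and>
        (\<forall>s y. s \<in> {a..b} \<and> y \<in> cball c \<rho> \<longrightarrow> u s y - \<phi> s y \<le> u th xh - \<phi> th xh)"
    then have th: "0 < th" "th \<le> T" by auto
    have D: "Dx u th xh = Dx \<phi> th xh"
      by (rule Dx_eq_max[OF assms(8), of \<phi> th xh c \<rho>]) (use h in auto)
    have J: "Jop \<alpha> (th - a) \<phi> th xh \<le> Jop \<alpha> (th - a) u th xh"
    proof (rule J_mono[OF _ assms(8) th assms(2,3)])
      fix \<tau> assume "\<tau> \<in> {0<..th - a}"
      then have "u (th-\<tau>) xh - \<phi> (th-\<tau>) xh \<le> u th xh - \<phi> th xh" using h by auto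
      then show "\<phi> th xh - \<phi> (th - \<tau>) xh \<le> u th xh - u (th - \<tau>) xh" by simp
    qed (use h in auto)
    have "caputo \<alpha> u th xh = Jop \<alpha> (th - a) u th xh + Kop \<alpha> (th - a) u th xh"
      by (rule caputo_JK[OF assms(8) th assms(2,3)]) (use h in auto)
    moreover have "caputo \<alpha> u th xh + H th xh (u th xh) (Dx u th xh) = 0" using eq th by auto
    ultimately show "Jop \<alpha> (th - a) \<phi> th xh + Kop \<alpha> (th - a) u th xh + H th xh (u th xh) (Dx \<phi> th xh) \<le> 0"
      using J D by simp
  qed
  have sup: "viscosity_supersolution \<alpha> T H u"
    unfolding viscosity_supersolution_def
  proof (intro conjI allI impI)
    show "periodic_x u" by fact
    show "lsc_on ({0..T} \<times> UNIV) (\<lambda>(t,x). u t x)" by (rule cont_usc_lsc(2)[OF cu])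
    fix a b c \<rho> \<phi> th xh
    assume h: "0 \<le> a \<and> a < b \<and> b \<le> T \<and> 0 < \<rho> \<and> C1 0 T \<phi> \<and> th \<in> {a<..b} \<and> xh \<in> ball c \<rho> \<and>
        (\<forall>s y. s \<in> {a..b} \<and> y \<in> cball c \<rho> \<longrightarrow> u th xh - \<phi> th xh \<le> u s y - \<phi> s y)"
    then have th: "0 < th" "th \<le> T" by auto
    have D: "Dx \<phi> th xh = Dx u th xh"
    proof (rule Dx_eq_max[OF _ assms(8), of \<phi> th xh c \<rho>])
      fix y assume "y \<in> cball c \<rho>"
      then have "u th xh - \<phi> th xh \<le> u th y - \<phi> th y" using h by auto
      then show "\<phi> th y - u th y \<le> \<phi> th xh - u th xh" by simp
    qed (use h in auto)
    have J: "Jop \<alpha> (th - a) u th xh \<le> Jop \<alpha> (th - a) \<phi> th xh"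
    proof (rule J_mono[OF assms(8) _ th assms(2,3)])
      fix \<tau> assume "\<tau> \<in> {0<..th - a}"
      then have "u th xh - \<phi> th xh \<le> u (th-\<tau>) xh - \<phi> (th-\<tau>) xh" using h by auto
      then show "u th xh - u (th - \<tau>) xh \<le> \<phi> th xh - \<phi> (th - \<tau>) xh" by simp
    qed (use h in auto)
    have "caputo \<alpha> u th xh = Jop \<alpha> (th - a) u th xh + Kop \<alpha> (th - a) u th xh"
      by (rule caputo_JK[OF assms(8) th assms(2,3)]) (use h in auto)
    moreover have "caputo \<alpha> u th xh + H th xh (u th xh) (Dx u th xh) = 0" using eq th by auto
    ultimately show "Jop \<alpha> (th - a) \<phi> th xh + Kop \<alpha> (th - a) u th xh + H th xh (u th xh) (Dx \<phi> th xh) \<ge> 0"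
      using J D by simp
  qed
  show "viscosity_solution_ivp \<alpha> T H u0 u"
    unfolding viscosity_solution_ivp_def using cu sub sup ini by blast
next
  assume v: "viscosity_solution_ivp \<alpha> T H u0 u"
  then have sub: "viscosity_subsolution \<alpha> T H u" and sup: "viscosity_supersolution \<alpha> T H u"
    and ini: "\<forall>x. u 0 x = u0 x" by (auto simp: viscosity_solution_ivp_def)
  have "caputo \<alpha> u t x + H t x (u t x) (Dx u t x) = 0" if t: "t \<in> {0<..T}" for t x
  proof -
    have pre: "(0::real) \<le> 0 \<and> (0::real) < t \<and> t \<le> T \<and> (0::real) < 1 \<and> C1 0 T u \<and> t \<in> {0<..t} \<and> x \<in> ball x 1"
      using t assms(8) by auto
    have "Jop \<alpha> (t - 0) u t x + Kop \<alpha> (t - 0) u t x + H t x (u t x) (Dx u t x) \<le> 0"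
      using conjunct2[OF conjunct2[OF sub[unfolded viscosity_subsolution_def]], rule_format, where a=0 and b=t and c=x and \<rho>=1 and \<phi>=u and th=t and xh=x] pre by auto
    moreover have "Jop \<alpha> (t - 0) u t x + Kop \<alpha> (t - 0) u t x + H t x (u t x) (Dx u t x) \<ge> 0"
      using conjunct2[OF conjunct2[OF sup[unfolded viscosity_supersolution_def]], rule_format, where a=0 and b=t and c=x and \<rho>=1 and \<phi>=u and th=t and xh=x] pre by auto
    moreover have "caputo \<alpha> u t x = Jop \<alpha> (t - 0) u t x + Kop \<alpha> (t - 0) u t x"
      by (rule caputo_JK[OF assms(8) _ _ assms(2,3)]) (use t in auto)
    ultimately show ?thesis by simp
  qed
  then show "classical_solution \<alpha> T H u0 u"
    unfolding classical_solution_def using assms(7,8) ini by blast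
qed


end
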